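(* In the setting where $\bar g>0$, $\tilde\eta\in[0,1]$, $\|\mathbf{G}^T\|_h<\tilde b_0$ (with $\tilde b_0=\frac1{1-\tilde\eta}$ if $\tilde\eta\in[0,\frac13]$, $\tilde b_0=\frac1{2\tilde\eta}$ if $\tilde\eta\in(\frac13,1]$), let $\tilde\phi=\tilde\phi_{\tilde\eta}(b^2,s)$, with $b^2=\|\mathbf{G}^T\|_h^2/\bar g^2$ and $|s|\le b$, be the unique positive root of $$\|\mathbf{G}^T\|_h^2[1-(1-\tilde\eta)^2\|\mathbf{G}^T\|_h^2]\tilde\phi^4+2[1-(2-\tilde\eta)(1-\tilde\eta)\|\mathbf{G}^T\|_h^2]\bar gs\tilde\phi^3+[1-2(1-\tilde\eta)\|\mathbf{G}^T\|_h^2-(2-\tilde\eta)^2\bar g^2s^2]\tilde\phi^2-2(2-\tilde\eta)\bar gs\tilde\phi-1=0,$$ and let $A=-[1-(2-\tilde\eta)(1-\tilde\eta)\|\mathbf{G}^T\|_h^2]\tilde\phi^2+(2-\tilde\eta)^2\bar gs\tilde\phi+2-\tilde\eta$, $B=-[1-2(1-\tilde\eta)\|\mathbf{G}^T\|_h^2]\tilde\phi^2+2(2-\tilde\eta)\bar gs\tilde\phi+2$, $C=2\|\mathbf{G}^T\|_h^2[1-(1-\tilde\eta)^2\|\mathbf{G}^T\|_h^2]\tilde\phi^3+3[1-(2-\tilde\eta)(1-\tilde\eta)\|\mathbf{G}^T\|_h^2]\bar gs\tilde\phi^2+\{[1-2(1-\tilde\eta)\|\mathbf{G}^T\|_h^2]-(2-\tilde\eta)^2\bar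 g^2s^2\}\tilde\phi-(2-\tilde\eta)\bar gs$, and $H=2+\bar gs\tilde\phi$. Then the derivative $\tilde\phi_1$ of $\tilde\phi$ with respect to $b^2$ and the derivative $\tilde\phi_{12}$ of $\tilde\phi_1$ with respect to $s$ satisfy $$\tilde\phi_1=\frac{\bar g^2}{2C}[(1-\tilde\eta)B-\tilde\eta\tilde\phi^2]\tilde\phi^2,\qquad \tilde\phi_{12}=\frac{\bar g^3}{2C^3}\Big[A(B+C\tilde\phi)[(1-\tilde\eta)B-\tilde\eta\tilde\phi^2]+\tilde\eta^2H\tilde\phi^4\Big]\tilde\phi.$$
   Context: $\mathbf{G}^T=-\bar g\,\omega^\sharp$ is the gravitational wind on a Riemannian manifold $(M,h)$, $\omega^\sharp$ the gradient of a smooth function; $\tilde F_{\tilde\eta}=\alpha\tilde\phi_{\tilde\eta}(b^2,s)$ is the slippery-cross-slope metric with $\alpha=\sqrt{h(y,y)}$, $s=\beta/\alpha$, $\beta=h(y,\omega^\sharp)$. On the stated range $C\neq0$. *)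

theory Defs
  imports "HOL-Analysis.Analysis"
begin

text \<open>Parameters: gb = g-bar > 0, eta = tilde eta, t = b^2, s.  The norm of G^T is
  gb * b, so its square is gb^2 * t.\<close>

definition b0 :: "real \<Rightarrow> real" where
  "b0 eta = (if eta \<le> 1/3 then 1 / (1 - eta) else 1 / (2 * eta))"

definition quartic :: "real \<Rightarrow> real \<Rightarrow> real \<Rightarrow> real \<Rightarrow> real \<Rightarrow> real" where
  "quartic gb eta t s x =
     (let G2 = gb^2 * t in
        G2 * (1 - (1 - eta)^2 * G2) * x^4
      + 2 * (1 - (2 - eta) * (1 - eta) * G2) * gb * s * x^3
      + (1 - 2 * (1 - eta) * G2 - (2 - eta)^2 * gb^2 * s^2) * x^2
      - 2 * (2 - eta) * gb * s * x - 1)"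

definition phi :: "real \<Rightarrow> real \<Rightarrow> real \<Rightarrow> real \<Rightarrow> real" where
  "phi gb eta t s = (THE x. x > 0 \<and> quartic gb eta t s x = 0)"

definition phi1 :: "real \<Rightarrow> real \<Rightarrow> real \<Rightarrow> real \<Rightarrow> real" where
  "phi1 gb eta t s = deriv (\<lambda>t'. phi gb eta t' s) t"

definition coefA :: "real \<Rightarrow> real \<Rightarrow> real \<Rightarrow> real \<Rightarrow> real \<Rightarrow> real" where
  "coefA gb eta t s x = (let G2 = gb^2 * t in
     - (1 - (2 - eta) * (1 - eta) * G2) * x^2 + (2 - eta)^2 * gb * s * x + 2 - eta)"

definition coefB :: "real \<Rightarrow> real \<Rightarrow> real \<Rightarrow> real \<Rightarrow> real \<Rightarrow> real" where
  "coefB gb eta t s x = (let G2 = gb^2 * t in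
     - (1 - 2 * (1 - eta) * G2) * x^2 + 2 * (2 - eta) * gb * s * x + 2)"

definition coefC :: "real \<Rightarrow> real \<Rightarrow> real \<Rightarrow> real \<Rightarrow> real \<Rightarrow> real" where
  "coefC gb eta t s x = (let G2 = gb^2 * t in
       2 * G2 * (1 - (1 - eta)^2 * G2) * x^3
     + 3 * (1 - (2 - eta) * (1 - eta) * G2) * gb * s * x^2
     + ((1 - 2 * (1 - eta) * G2) - (2 - eta)^2 * gb^2 * s^2) * x
     - (2 - eta) * gb * s)"

definition coefH :: "real \<Rightarrow> real \<Rightarrow> real \<Rightarrow> real" where
  "coefH gb s x = 2 + gb * s * x"

end

theory Submission
  imports Defs
begin

definition Rw :: "real \<Rightarrow> real \<Rightarrow> real \<Rightarrow> real" where
  "Rw G \<sigma> w = sqrt (w^2 + 2*\<sigma>*w + G)"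
definition Lw :: "real \<Rightarrow> real \<Rightarrow> real \<Rightarrow> real \<Rightarrow> real" where
  "Lw G \<sigma> e w = w^2 + (2-e)*\<sigma>*w + (1-e)*G"
definition kw :: "real \<Rightarrow> real \<Rightarrow> real \<Rightarrow> real \<Rightarrow> real" where
  "kw G \<sigma> e w = Lw G \<sigma> e w - Rw G \<sigma> w"
definition Qg :: "real \<Rightarrow> real \<Rightarrow> real \<Rightarrow> real \<Rightarrow> real" where
  "Qg G \<sigma> e x = G*(1-(1-e)^2*G)*x^4 + 2*(1-(2-e)*(1-e)*G)*\<sigma>*x^3
     + (1-2*(1-e)*G-(2-e)^2*\<sigma>^2)*x^2 - 2*(2-e)*\<sigma>*x - 1"
definition Cg :: "real \<Rightarrow> real \<Rightarrow> real \<Rightarrow> real \<Rightarrow> real" where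
  "Cg G \<sigma> e x = 2*G*(1-(1-e)^2*G)*x^3 + 3*(1-(2-e)*(1-e)*G)*\<sigma>*x^2
     + ((1-2*(1-e)*G) - (2-e)^2*\<sigma>^2)*x - (2-e)*\<sigma>"

definition hyp :: "real \<Rightarrow> real \<Rightarrow> real \<Rightarrow> bool" where
  "hyp G \<sigma> e \<longleftrightarrow> 0 \<le> e \<and> e \<le> 1 \<and> \<sigma>^2 < G \<and> (1-e)^2*G < 1 \<and> e^2*G < 1"

lemma R2_pos: assumes "hyp G \<sigma> e" shows "w^2 + 2*\<sigma>*w + G > 0"
proof -
  have "w^2 + 2*\<sigma>*w + G = (w+\<sigma>)^2 + (G - \<sigma>^2)" by (simp add: power2_eq_square algebra_simps)
  moreover have "G - \<sigma>^2 > 0" using assms by (simp add: hyp_def)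
  ultimately show ?thesis by (metis add_nonneg_pos zero_le_power2)
qed

lemma Rw_pos: assumes "hyp G \<sigma> e" shows "Rw G \<sigma> w > 0"
  using R2_pos[OF assms] by (simp add: Rw_def)

lemma Rw_sq: assumes "hyp G \<sigma> e" shows "(Rw G \<sigma> w)^2 = w^2 + 2*\<sigma>*w + G"
  using R2_pos[OF assms, of w] by (simp add: Rw_def)

lemma L_plus_R_pos: assumes h: "hyp G \<sigma> e" shows "Lw G \<sigma> e w + Rw G \<sigma> w > 0"
proof -
  define R where "R = Rw G \<sigma> w"
  have Rp: "R > 0" using Rw_pos[OF h] by (simp add: R_def)
  have R2: "R^2 = w^2 + 2*\<sigma>*w + G" using Rw_sq[OF h] by (simp add: R_def)
  have L: "Lw G \<sigma> e w = R^2 - e*(\<sigma>*w + G)" unfolding Lw_def R2 by (simp add: algebra_simps)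
  have e0: "0 \<le> e" and e1: "e^2*G < 1" using h by (auto simp: hyp_def)
  have G0: "G > 0" using h by (auto simp: hyp_def) (smt (verit) zero_le_power2)
  have "e*(\<sigma>*w + G) < R"
  proof (cases "e*(\<sigma>*w + G) \<le> 0")
    case True then show ?thesis using Rp by linarith
  next
    case False
    have cs: "(\<sigma>*w + G)^2 \<le> G * R^2"
    proof -
      have "G * R^2 - (\<sigma>*w + G)^2 = (G - \<sigma>^2)*w^2" unfolding R2 by (simp add: power2_eq_square algebra_simps)
      moreover have "(G - \<sigma>^2)*w^2 \<ge> 0" using h by (simp add: hyp_def)
      ultimately show ?thesis by linarith
    qed
    have "(e*(\<sigma>*w + G))^2 = e^2 * (\<sigma>*w + G)^2" by (simp add: power_mult_distrib)
    also have "\<dots> \<le> e^2 * (G*R^2)" using cs by (simp add: mult_left_mono)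
    also have "\<dots> = (e^2*G) * R^2" by simp
    also have "\<dots> < 1 * R^2" using e1 Rp by (intro mult_strict_right_mono) auto
    finally have "(e*(\<sigma>*w + G))^2 < R^2" by simp
    then show ?thesis using Rp by (smt (verit) power_mono)
  qed
  then show ?thesis unfolding L R_def[symmetric] using Rp by (smt (verit) zero_le_power2)
qed


lemma Qg_inv: assumes "w \<noteq> 0"
  shows "Qg G \<sigma> e (1/w) = ((w^2 + 2*\<sigma>*w + G) - (Lw G \<sigma> e w)^2) / w^4"
proof -
  have "Qg G \<sigma> e (1/w) * w^4 = (w^2 + 2*\<sigma>*w + G) - (Lw G \<sigma> e w)^2"
    using assms unfolding Qg_def Lw_def
    apply (simp add: algebra_simps power_one_over)
    apply (simp add: power_def field_simps)
    done
  then show ?thesis using assms by (simp add: eq_divide_eq)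
qed

lemma Qg_kw: assumes h: "hyp G \<sigma> e" and w: "w > 0"
  shows "Qg G \<sigma> e (1/w) = - kw G \<sigma> e w * (Lw G \<sigma> e w + Rw G \<sigma> w) / w^4"
proof -
  have "(w^2 + 2*\<sigma>*w + G) - (Lw G \<sigma> e w)^2 = (Rw G \<sigma> w)^2 - (Lw G \<sigma> e w)^2"
    using Rw_sq[OF h] by simp
  also have "\<dots> = - kw G \<sigma> e w * (Lw G \<sigma> e w + Rw G \<sigma> w)"
    unfolding kw_def by (simp add: power2_eq_square algebra_simps)
  finally show ?thesis using Qg_inv[of w] w by simp
qed

lemma Qg_root_iff: assumes h: "hyp G \<sigma> e" and w: "w > 0"
  shows "Qg G \<sigma> e (1/w) = 0 \<longleftrightarrow> kw G \<sigma> e w = 0"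
  using Qg_kw[OF h w] L_plus_R_pos[OF h, of w] w by auto

lemma Qg_neg_iff: assumes h: "hyp G \<sigma> e" and w: "w > 0"
  shows "Qg G \<sigma> e (1/w) < 0 \<longleftrightarrow> kw G \<sigma> e w > 0"
    and "Qg G \<sigma> e (1/w) > 0 \<longleftrightarrow> kw G \<sigma> e w < 0"
proof -
  define P where "P = (Lw G \<sigma> e w + Rw G \<sigma> w) / w^4"
  have p: "P > 0" using L_plus_R_pos[OF h, of w] w by (simp add: P_def)
  have q: "Qg G \<sigma> e (1/w) = - (kw G \<sigma> e w * P)"
    using Qg_kw[OF h w] by (simp add: P_def)
  show "Qg G \<sigma> e (1/w) < 0 \<longleftrightarrow> kw G \<sigma> e w > 0"
    unfolding q using p by (simp add: zero_less_mult_iff)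
  show "Qg G \<sigma> e (1/w) > 0 \<longleftrightarrow> kw G \<sigma> e w < 0"
    unfolding q using p by (simp add: mult_less_0_iff)
qed

lemma root_u_pos: assumes h: "hyp G \<sigma> e" and w: "w > 0" and k: "kw G \<sigma> e w = 0"
  shows "w + \<sigma> > 0"
proof (rule ccontr)
  assume u: "\<not> w + \<sigma> > 0"
  define R where "R = Rw G \<sigma> w"
  have Rp: "R > 0" using Rw_pos[OF h] by (simp add: R_def)
  have R2: "R^2 = w^2 + 2*\<sigma>*w + G" using Rw_sq[OF h] by (simp add: R_def)
  have e0: "0 \<le> e" "e \<le> 1" and e1: "(1-e)^2*G < 1" using h by (auto simp: hyp_def)
  have LR: "R = R^2 - e*(\<sigma>*w + G)" using k unfolding kw_def Lw_def R_def[symmetric] R2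
    by (simp add: algebra_simps)
  have "\<sigma>*w + G - R^2 = - w*(w+\<sigma>)" unfolding R2 by (simp add: power2_eq_square algebra_simps)
  moreover have "w*(w+\<sigma>) \<le> 0" using u w by (simp add: mult_nonneg_nonpos)
  ultimately have "\<sigma>*w + G \<ge> R^2" by linarith
  then have "e*(\<sigma>*w + G) \<ge> e*R^2" using e0 by (simp add: mult_left_mono)
  then have "R \<le> (1-e)*R^2" using LR by (simp add: algebra_simps)
  then have "1*R \<le> ((1-e)*R)*R" by (simp add: power2_eq_square algebra_simps)
  then have a: "1 \<le> (1-e)*R" using Rp by (rule mult_right_le_imp_le)
  have "w*(w + 2*\<sigma>) < 0" using u w by (intro mult_pos_neg) auto
  then have "R^2 < G" unfolding R2 by (simp add: power2_eq_square algebra_simps)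
  then have "(1-e)^2*R^2 \<le> (1-e)^2*G" by (simp add: mult_left_mono)
  then have "((1-e)*R)^2 < 1" using e1 by (simp add: power_mult_distrib)
  moreover have "1 \<le> ((1-e)*R)^2" using a by (rule one_le_power)
  ultimately show False by linarith
qed


lemma p_pos:
  assumes h: "hyp G \<sigma> e" and R0: "R \<ge> 0" and RD: "R^2 \<ge> G - \<sigma>^2"
  shows "R^3 - (2-e)*(G-\<sigma>^2)*R + (G-\<sigma>^2) > 0"
proof -
  define D where "D = G - \<sigma>^2"
  define d where "d = sqrt D"
  have D0: "D > 0" using h by (simp add: hyp_def D_def)
  have d0: "d > 0" using D0 by (simp add: d_def)
  have dd: "d^2 = D" using D0 by (simp add: d_def)
  have e0: "0 \<le> e" "e \<le> 1" and e1: "(1-e)^2*G < 1" using h by (auto simp: hyp_def)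
  have Rd: "R \<ge> d" using RD R0 unfolding d_def D_def[symmetric] by (simp add: real_le_lsqrt)
  have "(1-e)^2*D \<le> (1-e)^2*G" unfolding D_def by (simp add: mult_left_mono)
  then have "((1-e)*d)^2 < 1" using e1 by (simp add: power_mult_distrib dd)
  then have ed: "(1-e)*d < 1" by (smt (verit) one_le_power)
  have pd: "d^3 - (2-e)*D*d + D = D*(1-(1-e)*d)"
    unfolding dd[symmetric] by (simp add: power2_eq_square power3_eq_cube algebra_simps)
  have pd_pos: "D*(1-(1-e)*d) > 0" using D0 ed by simp
  have diff: "R^3 - (2-e)*D*R + D - (d^3 - (2-e)*D*d + D) = (R-d)*(R^2 + R*d - (1-e)*D)"
    unfolding dd[symmetric] by (simp add: power2_eq_square power3_eq_cube algebra_simps)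
  have "R*d \<ge> d*d" using Rd d0 by (simp add: mult_right_mono)
  moreover have "R^2 \<ge> D" using RD by (simp add: D_def)
  moreover have "(1-e)*D \<le> D" using e0 D0 by (simp add: mult_le_cancel_right1)
  moreover have "R*d \<ge> 0" using R0 d0 by simp
  ultimately have "R^2 + R*d - (1-e)*D \<ge> 0" using dd unfolding power2_eq_square by linarith
  then have "(R-d)*(R^2 + R*d - (1-e)*D) \<ge> 0" using Rd by simp
  then show ?thesis using diff pd pd_pos unfolding D_def[symmetric] by linarith
qed

lemma key_ident:
  fixes R w \<sigma> G e :: real
  assumes R2: "R^2 = w^2 + 2*\<sigma>*w + G"
  shows "(w+\<sigma>)*(R*(2*w + (2-e)*\<sigma>) - (w+\<sigma>)) - R*((w^2 + (2-e)*\<sigma>*w + (1-e)*G) - R)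
         = R^3 - (2-e)*(G-\<sigma>^2)*R + (G-\<sigma>^2)"
  using R2 by algebra


lemma kw_deriv: assumes h: "hyp G \<sigma> e"
  shows "(kw G \<sigma> e has_real_derivative (2*w + (2-e)*\<sigma> - (w+\<sigma>)/Rw G \<sigma> w)) (at w)"
proof -
  have pos: "w^2 + 2*\<sigma>*w + G > 0" using R2_pos[OF h] .
  have "((\<lambda>w. w^2 + (2-e)*\<sigma>*w + (1-e)*G - sqrt (w^2 + 2*\<sigma>*w + G)) has_real_derivative
     (2*w + (2-e)*\<sigma> - (w+\<sigma>)/sqrt (w^2 + 2*\<sigma>*w + G))) (at w)"
    using pos
    by (auto intro!: derivative_eq_intros simp: field_simps)
  then show ?thesis unfolding kw_def Lw_def Rw_def[abs_def] by simp
qed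

lemma kw_cont: "continuous_on A (kw G \<sigma> e)"
  unfolding kw_def Lw_def Rw_def by (intro continuous_intros)

lemma Psi_deriv_pos:
  assumes h: "hyp G \<sigma> e" and u: "w + \<sigma> > 0"
  shows "\<exists>y. ((\<lambda>w. kw G \<sigma> e w / (w+\<sigma>)) has_real_derivative y) (at w) \<and> y > 0"
proof -
  define R where "R = Rw G \<sigma> w"
  have Rp: "R > 0" using Rw_pos[OF h] by (simp add: R_def)
  have R2: "R^2 = w^2 + 2*\<sigma>*w + G" using Rw_sq[OF h] by (simp add: R_def)
  define y where "y = ((2*w + (2-e)*\<sigma> - (w+\<sigma>)/R)*(w+\<sigma>) - kw G \<sigma> e w) / (w+\<sigma>)^2"
  have d: "((\<lambda>w. kw G \<sigma> e w / (w+\<sigma>)) has_real_derivative y) (at w)"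
  proof -
    have "((\<lambda>w. kw G \<sigma> e w / (w+\<sigma>)) has_real_derivative
      ((2*w + (2-e)*\<sigma> - (w+\<sigma>)/R) * (w+\<sigma>) - kw G \<sigma> e w * 1) / ((w+\<sigma>)*(w+\<sigma>))) (at w)"
      unfolding R_def using u
      by (intro DERIV_divide kw_deriv[OF h] derivative_eq_intros) auto
    then show ?thesis unfolding y_def by (simp add: power2_eq_square)
  qed
  have "R^2 \<ge> G - \<sigma>^2" 
  proof -
    have "R^2 - (G - \<sigma>^2) = (w+\<sigma>)^2" unfolding R2 by (simp add: power2_eq_square algebra_simps)
    then show ?thesis by (metis diff_ge_0_iff_ge zero_le_power2)
  qed
  have ident: "((2*w + (2-e)*\<sigma> - (w+\<sigma>)/R)*(w+\<sigma>) - kw G \<sigma> e w) * R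
      = R^3 - (2-e)*(G-\<sigma>^2)*R + (G-\<sigma>^2)"
  proof -
    have "((2*w + (2-e)*\<sigma> - (w+\<sigma>)/R)*(w+\<sigma>) - kw G \<sigma> e w) * R
      = (w+\<sigma>)*(R*(2*w + (2-e)*\<sigma>) - (w+\<sigma>)) - R*((w^2 + (2-e)*\<sigma>*w + (1-e)*G) - R)"
      using Rp unfolding kw_def Lw_def R_def[symmetric] by (simp add: field_simps)
    also have "\<dots> = R^3 - (2-e)*(G-\<sigma>^2)*R + (G-\<sigma>^2)" by (rule key_ident[OF R2])
    finally show ?thesis .
  qed
  have "R^3 - (2-e)*(G-\<sigma>^2)*R + (G-\<sigma>^2) > 0"
    by (rule p_pos[OF h]) (use Rp \<open>R^2 \<ge> G - \<sigma>^2\<close> in auto)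
  then have "((2*w + (2-e)*\<sigma> - (w+\<sigma>)/R)*(w+\<sigma>) - kw G \<sigma> e w) > 0"
    using ident Rp by (metis zero_less_mult_pos2)
  then have "y > 0" unfolding y_def using u by simp
  then show ?thesis using d by blast
qed


lemma Psi_incr:
  assumes h: "hyp G \<sigma> e" and a: "a + \<sigma> > 0" and ab: "a < b"
  shows "kw G \<sigma> e a / (a+\<sigma>) < kw G \<sigma> e b / (b+\<sigma>)"
  by (rule DERIV_pos_imp_increasing[OF ab]) (rule Psi_deriv_pos[OF h], use a in linarith)

lemma kw_root_unique:
  assumes h: "hyp G \<sigma> e" and "a > 0" "b > 0" "kw G \<sigma> e a = 0" "kw G \<sigma> e b = 0"
  shows "a = b"
proof (rule ccontr)
  assume ne: "a \<noteq> b"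
  have ua: "a + \<sigma> > 0" and ub: "b + \<sigma> > 0" using root_u_pos[OF h] assms by auto
  show False
  proof (cases "a < b")
    case True
    from Psi_incr[OF h ua True] assms show False by simp
  next
    case False
    then have "b < a" using ne by simp
    from Psi_incr[OF h ub this] assms show False by simp
  qed
qed

lemma kw_zero_neg: assumes h: "hyp G \<sigma> e" shows "kw G \<sigma> e 0 < 0"
proof -
  define g where "g = sqrt G"
  have G0: "G > 0" using h zero_le_power2[of \<sigma>] unfolding hyp_def by linarith
  have g0: "g > 0" using G0 by (simp add: g_def)
  have gg: "g^2 = G" using G0 by (simp add: g_def)
  have e0: "0 \<le> e" "e \<le> 1" and e1: "(1-e)^2*G < 1" using h by (auto simp: hyp_def)
  have "((1-e)*g)^2 < 1" using e1 by (simp add: power_mult_distrib gg)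
  then have eg: "(1-e)*g < 1" using power_less_imp_less_base[of "(1-e)*g" 2 1] by simp
  have "kw G \<sigma> e 0 = (1-e)*G - g" by (simp add: kw_def Lw_def Rw_def g_def)
  also have "\<dots> = g*((1-e)*g - 1)" unfolding gg[symmetric] by (simp add: power2_eq_square algebra_simps)
  also have "\<dots> < 0" using g0 eg by (simp add: mult_pos_neg)
  finally show ?thesis .
qed

lemma kw_big_pos: assumes h: "hyp G \<sigma> e" and z: "z \<ge> 2 * sqrt G + 2" shows "kw G \<sigma> e z > 0"
proof -
  define g where "g = sqrt G"
  have G0: "G > 0" using h zero_le_power2[of \<sigma>] unfolding hyp_def by linarith
  have g0: "g > 0" using G0 by (simp add: g_def)
  have gg: "g^2 = G" using G0 by (simp add: g_def)
  have e0: "0 \<le> e" "e \<le> 1" using h by (auto simp: hyp_def)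
  have "\<sigma>^2 < g^2" using h gg by (simp add: hyp_def)
  then have sg: "\<bar>\<sigma>\<bar> < g" using g0 power2_less_imp_less[of "\<bar>\<sigma>\<bar>" g] by simp
  have v0: "z > 0" using z g0 unfolding g_def by linarith
  have "z^2 + 2*\<sigma>* z + G \<le> (z+g)^2"
  proof -
    have "\<sigma>* z \<le> g* z" using sg v0 by (intro mult_right_mono) auto
    then show ?thesis unfolding gg[symmetric] by (simp add: power2_eq_square algebra_simps)
  qed
  then have Rle: "Rw G \<sigma> z \<le> z + g" unfolding Rw_def using v0 g0 by (simp add: real_sqrt_le_iff real_le_lsqrt)
  have "(2-e)*\<sigma>* z \<ge> -(2*g* z)"
  proof -
    have "(2-e)*\<bar>\<sigma>\<bar> \<le> 2*\<bar>\<sigma>\<bar>" using e0 by (intro mult_right_mono) auto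
    then have "(2-e)*\<bar>\<sigma>\<bar> \<le> 2*g" using sg by linarith
    then have "(2-e)*\<bar>\<sigma>\<bar>* z \<le> 2*g* z" using v0 by (simp add: mult_right_mono)
    moreover have "\<bar>(2-e)*\<sigma>* z\<bar> = (2-e)*\<bar>\<sigma>\<bar>* z" using e0 v0 by (simp add: abs_mult)
    moreover have "-\<bar>(2-e)*\<sigma>* z\<bar> \<le> (2-e)*\<sigma>* z" by simp
    ultimately show ?thesis by linarith
  qed
  moreover have "(1-e)*G \<ge> 0" using e0 G0 by simp
  ultimately have "Lw G \<sigma> e z \<ge> z^2 - 2*g* z" unfolding Lw_def by linarith
  then have "kw G \<sigma> e z \<ge> z^2 - 2*g* z - (z+g)" unfolding kw_def using Rle by linarith
  moreover have "z^2 - 2*g* z - (z+g) = z*(z - 2*g - 1) - g" by (simp add: power2_eq_square algebra_simps)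
  moreover have "z*(z - 2*g - 1) \<ge> z*1" using z v0 unfolding g_def by (intro mult_left_mono) auto
  ultimately show ?thesis using z v0 unfolding g_def by linarith
qed

lemma hyp_G_pos: "hyp G \<sigma> e \<Longrightarrow> G > 0"
  using zero_le_power2[of \<sigma>] unfolding hyp_def by linarith

lemma kw_root_exists: assumes h: "hyp G \<sigma> e" shows "\<exists>w>0. kw G \<sigma> e w = 0"
proof -
  have "sqrt G \<ge> 0" using hyp_G_pos[OF h] by simp
  have "\<exists>w\<ge>0. w \<le> 2 * sqrt G + 2 \<and> kw G \<sigma> e w = 0"
    using kw_zero_neg[OF h] kw_big_pos[OF h order_refl] \<open>sqrt G \<ge> 0\<close>
    by (intro IVT') (auto intro: kw_cont)
  then obtain w where "w \<ge> 0" "kw G \<sigma> e w = 0" by blast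
  moreover then have "w \<noteq> 0" using kw_zero_neg[OF h] by auto
  ultimately show ?thesis by (intro exI[of _ w]) auto
qed

lemma kw_sign:
  assumes h: "hyp G \<sigma> e" and w0: "w0 > 0" "kw G \<sigma> e w0 = 0" and w: "w > 0"
  shows "w < w0 \<Longrightarrow> kw G \<sigma> e w < 0" and "w0 < w \<Longrightarrow> kw G \<sigma> e w > 0"
proof -
  assume lt: "w < w0"
  show "kw G \<sigma> e w < 0"
  proof (rule ccontr)
    assume "\<not> kw G \<sigma> e w < 0"
    then have "kw G \<sigma> e 0 \<le> 0" "0 \<le> kw G \<sigma> e w" using kw_zero_neg[OF h] by auto
    then obtain z where z: "z \<ge> 0" "z \<le> w" "kw G \<sigma> e z = 0"
      using IVT'[of "kw G \<sigma> e" 0 0 w] w kw_cont by auto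
    then have "z \<noteq> 0" using kw_zero_neg[OF h] by auto
    then have "z = w0" using kw_root_unique[OF h _ w0(1) z(3) w0(2)] z by auto
    then show False using z lt by auto
  qed
next
  assume gt: "w0 < w"
  show "kw G \<sigma> e w > 0"
  proof (rule ccontr)
    assume "\<not> kw G \<sigma> e w > 0"
    define B where "B = max w (2 * sqrt G + 2)"
    have "kw G \<sigma> e B > 0" using kw_big_pos[OF h] by (simp add: B_def)
    then have "kw G \<sigma> e w \<le> 0" "0 \<le> kw G \<sigma> e B" "w \<le> B" using \<open>\<not> kw G \<sigma> e w > 0\<close> by (auto simp: B_def)
    then obtain z where z: "z \<ge> w" "z \<le> B" "kw G \<sigma> e z = 0"
      using IVT'[of "kw G \<sigma> e" w 0 B] kw_cont by auto
    then have "z = w0" using kw_root_unique[OF h _ w0(1) z(3) w0(2)] w by auto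
    then show False using z gt by auto
  qed
qed

lemma Cg_ident:
  fixes w G \<sigma> e :: real
  assumes "w \<noteq> 0"
  shows "Cg G \<sigma> e (1/w) * w^3 = 2*((w^2 + 2*\<sigma>*w + G) - (Lw G \<sigma> e w)^2)
     + w*(Lw G \<sigma> e w * (2*w + (2-e)*\<sigma>) - (w+\<sigma>))"
  using assms unfolding Cg_def Lw_def
  apply (simp add: algebra_simps power_one_over)
  apply (simp add: power_def field_simps)
  done

lemma Cg_pos:
  assumes h: "hyp G \<sigma> e" and w: "w > 0" and k: "kw G \<sigma> e w = 0"
  shows "Cg G \<sigma> e (1/w) > 0"
proof -
  define R where "R = Rw G \<sigma> w"
  have Rp: "R > 0" using Rw_pos[OF h] by (simp add: R_def)
  have R2: "R^2 = w^2 + 2*\<sigma>*w + G" using Rw_sq[OF h] by (simp add: R_def)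
  have L: "Lw G \<sigma> e w = R" using k by (simp add: kw_def R_def)
  have u: "w + \<sigma> > 0" using root_u_pos[OF h w k] .
  have "R^2 - R^2 = 0" by simp
  have C: "Cg G \<sigma> e (1/w) * w^3 = w*(R * (2*w + (2-e)*\<sigma>) - (w+\<sigma>))"
    using Cg_ident[of w G \<sigma> e] w unfolding L R2[symmetric] by simp
  have "(w+\<sigma>)*(R*(2*w + (2-e)*\<sigma>) - (w+\<sigma>)) = R^3 - (2-e)*(G-\<sigma>^2)*R + (G-\<sigma>^2)"
    using key_ident[OF R2, of e] L unfolding Lw_def by simp
  moreover have "R^2 \<ge> G - \<sigma>^2"
  proof -
    have "R^2 - (G - \<sigma>^2) = (w+\<sigma>)^2" unfolding R2 by (simp add: power2_eq_square algebra_simps)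
    then show ?thesis by (metis diff_ge_0_iff_ge zero_le_power2)
  qed
  ultimately have "(w+\<sigma>)*(R*(2*w + (2-e)*\<sigma>) - (w+\<sigma>)) > 0"
    using p_pos[OF h] Rp by auto
  then have E: "R*(2*w + (2-e)*\<sigma>) - (w+\<sigma>) > 0" using u by (simp add: zero_less_mult_iff)
  then have "Cg G \<sigma> e (1/w) * w^3 > 0" using C w by simp
  then show ?thesis using w by (simp add: zero_less_mult_iff)
qed


lemma ev_at_to_nhds:
  assumes "eventually P (at (z0::real))" and "P z0"
  shows "eventually P (nhds z0)"
proof -
  have "eventually (\<lambda>x. x \<noteq> z0 \<longrightarrow> x \<in> UNIV \<longrightarrow> P x) (nhds z0)"
    using assms(1) unfolding eventually_at_filter .
  then show ?thesis by eventually_elim (use assms(2) in auto)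
qed

lemma ift_cont:
  fixes F :: "real \<Rightarrow> real \<Rightarrow> real" and X :: "real \<Rightarrow> real"
  assumes ev: "\<forall>\<^sub>F z in nhds z0. X z > 0 \<and> F z (X z) = 0 \<and>
                 (\<forall>y>0. (y < X z \<longrightarrow> F z y < 0) \<and> (X z < y \<longrightarrow> F z y > 0))"
    and cont: "\<And>y. isCont (\<lambda>z. F z y) z0"
  shows "isCont X z0"
proof -
  have P0: "X z0 > 0 \<and> F z0 (X z0) = 0 \<and>
                 (\<forall>y>0. (y < X z0 \<longrightarrow> F z0 y < 0) \<and> (X z0 < y \<longrightarrow> F z0 y > 0))"
    using eventually_nhds_x_imp_x[OF ev] .
  define x0 where "x0 = X z0"
  have x0: "x0 > 0" using P0 by (simp add: x0_def)
  show ?thesis unfolding isCont_def tendsto_iff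
  proof (intro allI impI)
    fix \<epsilon> :: real assume e: "\<epsilon> > 0"
    define a where "a = max (x0 - \<epsilon>/2) (x0/2)"
    define b where "b = x0 + \<epsilon>/2"
    have a0: "a > 0" "a < x0" "x0 - \<epsilon> < a" using x0 e by (auto simp: a_def)
    have b0: "b > x0" "b < x0 + \<epsilon>" using e by (auto simp: b_def)
    have Fa: "F z0 a < 0" using P0 a0 by (auto simp: x0_def)
    have Fb: "F z0 b > 0" using P0 b0 x0 by (auto simp: x0_def)
    have ea: "eventually (\<lambda>z. F z a < 0) (at z0)"
      using order_tendstoD(2)[OF cont[of a, unfolded isCont_def] Fa] .
    have eb: "eventually (\<lambda>z. F z b > 0) (at z0)"
      using order_tendstoD(1)[OF cont[of b, unfolded isCont_def] Fb] .
    have ev': "eventually (\<lambda>z. X z > 0 \<and> F z (X z) = 0 \<and>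
                 (\<forall>y>0. (y < X z \<longrightarrow> F z y < 0) \<and> (X z < y \<longrightarrow> F z y > 0))) (at z0)"
      unfolding eventually_at_filter using ev by (rule eventually_mono) auto
    show "\<forall>\<^sub>F z in at z0. dist (X z) (X z0) < \<epsilon>"
      using ea eb ev'
    proof eventually_elim
      case (elim z)
      have H: "\<forall>y>0. (y < X z \<longrightarrow> F z y < 0) \<and> (X z < y \<longrightarrow> F z y > 0)" using elim by blast
      have Fa': "F z a < 0" and Fb': "F z b > 0" and Fx: "F z (X z) = 0" using elim by auto
      have "\<not> X z < a"
      proof
        assume "X z < a" then have "F z a > 0" using H a0(1) by blast
        with Fa' show False by linarith
      qed
      moreover have "X z \<noteq> a"
      proof
        assume "X z = a" then have "F z a = 0" using Fx by simp
        with Fa' show False by linarith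
      qed
      moreover have "\<not> b < X z"
      proof
        assume "b < X z" then have "F z b < 0" using H b0(1) x0 by simp
        with Fb' show False by linarith
      qed
      moreover have "X z \<noteq> b"
      proof
        assume "X z = b" then have "F z b = 0" using Fx by simp
        with Fb' show False by linarith
      qed
      ultimately have "a < X z" "X z < b" by linarith+
      then show ?case using a0 b0 unfolding x0_def dist_real_def by auto
    qed
  qed
qed

lemma ift_deriv:
  fixes F A :: "real \<Rightarrow> real \<Rightarrow> real" and X B :: "real \<Rightarrow> real"
  assumes ev: "\<forall>\<^sub>F z in nhds z0. F z (X z) = 0"
    and contX: "isCont X z0"
    and decA: "\<And>z x. F z x - F z0 x = (z - z0) * A z x"
    and decB: "\<And>x. F z0 x - F z0 (X z0) = (x - X z0) * B x"
    and contA: "isCont (\<lambda>z. A z (X z)) z0"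
    and contB: "isCont B (X z0)"
    and Bnz: "B (X z0) \<noteq> 0"
  shows "(X has_real_derivative (- A z0 (X z0) / B (X z0))) (at z0)"
proof -
  define g where "g z = - A z (X z) / B (X z)" for z
  have cBX: "isCont (\<lambda>z. B (X z)) z0" using contX contB by (rule isCont_o2)
  have cg: "isCont g z0" unfolding g_def using contA cBX Bnz by (intro continuous_intros) auto
  have evB: "eventually (\<lambda>z. B (X z) \<noteq> 0) (nhds z0)"
  proof (rule ev_at_to_nhds)
    show "eventually (\<lambda>z. B (X z) \<noteq> 0) (at z0)"
      using cBX Bnz unfolding isCont_def by (rule tendsto_imp_eventually_ne)
  qed (use Bnz in auto)
  define Y where "Y z = X z0 + g z * (z - z0)" for z
  have dY: "(Y has_real_derivative g z0) (at z0)"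
    unfolding CARAT_DERIV by (intro exI[of _ g]) (auto simp: Y_def cg)
  have F0: "F z0 (X z0) = 0" using eventually_nhds_x_imp_x[OF ev] .
  have "eventually (\<lambda>z. X z = Y z) (nhds z0)"
    using ev evB
  proof eventually_elim
    case (elim z)
    have "0 = F z (X z) - F z0 (X z0)" using elim F0 by simp
    also have "\<dots> = (F z (X z) - F z0 (X z)) + (F z0 (X z) - F z0 (X z0))" by simp
    also have "\<dots> = (z - z0) * A z (X z) + (X z - X z0) * B (X z)" using decA decB by simp
    finally have "(X z - X z0) * B (X z) = - ((z - z0) * A z (X z))" by linarith
    then have "X z - X z0 = - ((z - z0) * A z (X z)) / B (X z)" using elim(2) by (simp add: field_simps)
    then have "X z = X z0 + (- A z (X z) / B (X z)) * (z - z0)" using elim(2)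
      by (simp add: field_simps)
    then show ?case unfolding Y_def g_def by simp
  qed
  then have "(X has_real_derivative g z0) (at z0)"
    using dY by (subst DERIV_cong_ev[OF refl _ refl]) auto
  then show ?thesis by (simp add: g_def)
qed


definition xr :: "real \<Rightarrow> real \<Rightarrow> real \<Rightarrow> real" where
  "xr G \<sigma> e = (THE x. x > 0 \<and> Qg G \<sigma> e x = 0)"

lemma xr_props:
  assumes h: "hyp G \<sigma> e"
  shows "xr G \<sigma> e > 0" "Qg G \<sigma> e (xr G \<sigma> e) = 0"
    "\<forall>y>0. (y < xr G \<sigma> e \<longrightarrow> Qg G \<sigma> e y < 0) \<and> (xr G \<sigma> e < y \<longrightarrow> Qg G \<sigma> e y > 0)"
    "Cg G \<sigma> e (xr G \<sigma> e) > 0"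
proof -
  obtain w0 where w0: "w0 > 0" "kw G \<sigma> e w0 = 0" using kw_root_exists[OF h] by blast
  define x0 where "x0 = 1/w0"
  have x0p: "x0 > 0" using w0 by (simp add: x0_def)
  have iff: "x > 0 \<and> Qg G \<sigma> e x = 0 \<longleftrightarrow> x = x0" for x
  proof
    assume a: "x > 0 \<and> Qg G \<sigma> e x = 0"
    then have "Qg G \<sigma> e (1/(1/x)) = 0" by simp
    then have "kw G \<sigma> e (1/x) = 0" using Qg_root_iff[OF h, of "1/x"] a by simp
    then have "1/x = w0" using kw_root_unique[OF h _ w0(1) _ w0(2)] a by simp
    moreover have "x = 1/(1/x)" by simp
    ultimately show "x = x0" unfolding x0_def by simp
  next
    assume "x = x0"
    then show "x > 0 \<and> Qg G \<sigma> e x = 0" using x0p Qg_root_iff[OF h w0(1)] w0 by (simp add: x0_def)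
  qed
  have xr: "xr G \<sigma> e = x0" unfolding xr_def
    by (rule the_equality) (use iff in auto)
  show "xr G \<sigma> e > 0" "Qg G \<sigma> e (xr G \<sigma> e) = 0" using iff[of x0] xr by auto
  show "\<forall>y>0. (y < xr G \<sigma> e \<longrightarrow> Qg G \<sigma> e y < 0) \<and> (xr G \<sigma> e < y \<longrightarrow> Qg G \<sigma> e y > 0)"
  proof (intro allI impI conjI)
    fix y :: real assume y: "y > 0"
    have wy: "1/y > 0" using y by simp
    { assume "y < xr G \<sigma> e"
      then have "w0 < 1/y" using y w0 xr unfolding x0_def by (simp add: field_simps)
      then have "kw G \<sigma> e (1/y) > 0" using kw_sign(2)[OF h w0 wy] by simp
      then have "Qg G \<sigma> e (1/(1/y)) < 0" using Qg_neg_iff(1)[OF h wy] by blast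
      then show "Qg G \<sigma> e y < 0" by simp }
    { assume "xr G \<sigma> e < y"
      then have "1/y < w0" using y w0 xr unfolding x0_def by (simp add: field_simps)
      then have "kw G \<sigma> e (1/y) < 0" using kw_sign(1)[OF h w0 wy] by simp
      then have "Qg G \<sigma> e (1/(1/y)) > 0" using Qg_neg_iff(2)[OF h wy] by blast
      then show "Qg G \<sigma> e y > 0" by simp }
  qed
  show "Cg G \<sigma> e (xr G \<sigma> e) > 0" using Cg_pos[OF h w0] xr by (simp add: x0_def)
qed

lemma quartic_Qg: "quartic gb eta t s x = Qg (gb^2 * t) (gb * s) eta x"
  by (simp add: quartic_def Qg_def Let_def power_mult_distrib)

lemma coefC_Cg: "coefC gb eta t s x = Cg (gb^2 * t) (gb * s) eta x"
  by (simp add: coefC_def Cg_def Let_def power_mult_distrib)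

lemma phi_xr: "phi gb eta t s = xr (gb^2 * t) (gb * s) eta"
  by (simp add: phi_def xr_def quartic_Qg)

definition Bq :: "real \<Rightarrow> real \<Rightarrow> real \<Rightarrow> real \<Rightarrow> real \<Rightarrow> real" where
  "Bq G \<sigma> e x0 x = G*(1-(1-e)^2*G)*(x^3 + x^2*x0 + x*x0^2 + x0^3)
     + 2*(1-(2-e)*(1-e)*G)*\<sigma>*(x^2 + x*x0 + x0^2)
     + (1-2*(1-e)*G-(2-e)^2*\<sigma>^2)*(x + x0) - 2*(2-e)*\<sigma>"

lemma Bq_dec: "Qg G \<sigma> e x - Qg G \<sigma> e x0 = (x - x0) * Bq G \<sigma> e x0 x"
  unfolding Qg_def Bq_def by algebra

lemma Bq_diag: "Bq G \<sigma> e x0 x0 = 2 * Cg G \<sigma> e x0"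
  unfolding Cg_def Bq_def by algebra

lemma Bq_cont: "isCont (Bq G \<sigma> e x0) x"
  unfolding Bq_def by (intro continuous_intros)

lemma Qg_cont_G: "isCont (\<lambda>z. Qg (a*z) \<sigma> e y) z0"
  unfolding Qg_def by (intro continuous_intros)

lemma Qg_cont_s: "isCont (\<lambda>z. Qg G (a*z) e y) z0"
  unfolding Qg_def by (intro continuous_intros)

lemma hyp_ev:
  assumes h: "hyp (Gf z0) (sf z0) e"
    and tG: "(Gf \<longlongrightarrow> Gf z0) (at z0)" and ts: "(sf \<longlongrightarrow> sf z0) (at z0)"
  shows "eventually (\<lambda>z. hyp (Gf z) (sf z) e) (nhds (z0::real))"
proof (rule ev_at_to_nhds)
  show "hyp (Gf z0) (sf z0) e" by (rule h)
  have e: "0 \<le> e" "e \<le> 1" using h by (auto simp: hyp_def)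
  have a: "Gf z0 - (sf z0)^2 > 0" "1 - (1-e)^2 * Gf z0 > 0" "1 - e^2 * Gf z0 > 0" using h by (auto simp: hyp_def)
  have t1: "((\<lambda>z. Gf z - (sf z)^2) \<longlongrightarrow> Gf z0 - (sf z0)^2) (at z0)" using tG ts by (intro tendsto_intros)
  have t2: "((\<lambda>z. 1 - (1-e)^2 * Gf z) \<longlongrightarrow> 1 - (1-e)^2 * Gf z0) (at z0)" using tG by (intro tendsto_intros)
  have t3: "((\<lambda>z. 1 - e^2 * Gf z) \<longlongrightarrow> 1 - e^2 * Gf z0) (at z0)" using tG by (intro tendsto_intros)
  show "eventually (\<lambda>z. hyp (Gf z) (sf z) e) (at z0)"
    using order_tendstoD(1)[OF t1 a(1)] order_tendstoD(1)[OF t2 a(2)] order_tendstoD(1)[OF t3 a(3)]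
    by eventually_elim (use e in \<open>auto simp: hyp_def\<close>)
qed


lemma phi_dt:
  assumes gb: "gb > 0" and h: "hyp (gb^2 * t) (gb * s) eta"
  shows "((\<lambda>t'. phi gb eta t' s) has_real_derivative
     (gb^2 / (2 * coefC gb eta t s (phi gb eta t s)) *
        ((1 - eta) * coefB gb eta t s (phi gb eta t s) - eta * (phi gb eta t s)^2) * (phi gb eta t s)^2)) (at t)"
proof -
  define F where "F z y = Qg (gb^2 * z) (gb * s) eta y" for z y
  define X where "X z = xr (gb^2 * z) (gb * s) eta" for z
  define A where "A z y = gb^2*((1 - (1-eta)^2*gb^2*(z+t))*y^4 - 2*(2-eta)*(1-eta)*(gb * s)*y^3 - 2*(1-eta)*y^2)" for z y
  define x0 where "x0 = X t"
  define B where "B = Bq (gb^2 * t) (gb * s) eta x0"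
  have evH: "eventually (\<lambda>z. hyp (gb^2 * z) (gb * s) eta) (nhds t)"
  proof -
    have "((\<lambda>z. gb^2 * z) \<longlongrightarrow> gb^2 * t) (at t)" by (intro tendsto_intros)
    then show ?thesis using hyp_ev[of "\<lambda>z. gb^2 * z" t "\<lambda>z. gb * s" eta] h by simp
  qed
  have ev: "\<forall>\<^sub>F z in nhds t. X z > 0 \<and> F z (X z) = 0 \<and>
                 (\<forall>y>0. (y < X z \<longrightarrow> F z y < 0) \<and> (X z < y \<longrightarrow> F z y > 0))"
    using evH by eventually_elim (use xr_props in \<open>auto simp: F_def X_def\<close>)
  have cont: "isCont (\<lambda>z. F z y) t" for y unfolding F_def by (rule Qg_cont_G)
  have contX: "isCont X t" by (rule ift_cont[OF ev cont])
  have ev0: "\<forall>\<^sub>F z in nhds t. F z (X z) = 0" using ev by (rule eventually_mono) auto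
  have decA: "F z y - F t y = (z - t) * A z y" for z y
    unfolding F_def A_def Qg_def by algebra
  have decB: "F t y - F t (X t) = (y - X t) * B y" for y
    unfolding F_def B_def x0_def by (rule Bq_dec)
  have contA: "isCont (\<lambda>z. A z (X z)) t" unfolding A_def using contX by (intro continuous_intros)
  have contB: "isCont B (X t)" unfolding B_def by (rule Bq_cont)
  have Cpos: "Cg (gb^2 * t) (gb * s) eta x0 > 0" using xr_props(4)[OF h] by (simp add: x0_def X_def)
  have BB: "B (X t) = 2 * Cg (gb^2 * t) (gb * s) eta x0" unfolding B_def x0_def by (rule Bq_diag)
  have Bnz: "B (X t) \<noteq> 0" using BB Cpos by simp
  have d: "(X has_real_derivative (- A t (X t) / B (X t))) (at t)"
    by (rule ift_deriv[OF ev0 contX decA decB contA contB Bnz])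
  have Xphi: "X = (\<lambda>t'. phi gb eta t' s)" by (simp add: X_def phi_xr fun_eq_iff)
  have x0phi: "phi gb eta t s = x0" by (simp add: x0_def X_def phi_xr)
  have Aval: "- A t x0 = gb^2 * ((1 - eta) * coefB gb eta t s x0 - eta * x0^2) * x0^2"
    unfolding A_def coefB_def Let_def by algebra
  have BB': "B x0 = 2 * coefC gb eta t s x0" using BB unfolding coefC_Cg by (simp add: x0_def)
  have Cpos': "coefC gb eta t s x0 > 0" using Cpos unfolding coefC_Cg .
  have "- A t x0 / B x0 = gb^2 / (2 * coefC gb eta t s x0) *
        ((1 - eta) * coefB gb eta t s x0 - eta * x0^2) * x0^2"
    unfolding BB' Aval by simp
  then have "- A t (X t) / B (X t) = gb^2 / (2 * coefC gb eta t s x0) *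
        ((1 - eta) * coefB gb eta t s x0 - eta * x0^2) * x0^2" by (simp add: x0_def)
  then show ?thesis using d unfolding Xphi x0phi by simp
qed

lemma phi_ds:
  assumes gb: "gb > 0" and h: "hyp (gb^2 * t) (gb * s) eta"
  shows "((\<lambda>s'. phi gb eta t s') has_real_derivative
     (gb * phi gb eta t s * coefA gb eta t s (phi gb eta t s) / coefC gb eta t s (phi gb eta t s))) (at s)"
proof -
  define F where "F z y = Qg (gb^2 * t) (gb * z) eta y" for z y
  define X where "X z = xr (gb^2 * t) (gb * z) eta" for z
  define A where "A z y = 2*(1-(2-eta)*(1-eta)*(gb^2 * t))*gb*y^3 - (2-eta)^2*gb^2*(z+s)*y^2 - 2*(2-eta)*gb*y" for z y
  define x0 where "x0 = X s"
  define B where "B = Bq (gb^2 * t) (gb * s) eta x0"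
  have evH: "eventually (\<lambda>z. hyp (gb^2 * t) (gb * z) eta) (nhds s)"
  proof -
    have "((\<lambda>z. gb * z) \<longlongrightarrow> gb * s) (at s)" by (intro tendsto_intros)
    then show ?thesis using hyp_ev[of "\<lambda>z. gb^2 * t" s "\<lambda>z. gb * z" eta] h by simp
  qed
  have ev: "\<forall>\<^sub>F z in nhds s. X z > 0 \<and> F z (X z) = 0 \<and>
                 (\<forall>y>0. (y < X z \<longrightarrow> F z y < 0) \<and> (X z < y \<longrightarrow> F z y > 0))"
    using evH by eventually_elim (use xr_props in \<open>auto simp: F_def X_def\<close>)
  have cont: "isCont (\<lambda>z. F z y) s" for y unfolding F_def by (rule Qg_cont_s)
  have contX: "isCont X s" by (rule ift_cont[OF ev cont])
  have ev0: "\<forall>\<^sub>F z in nhds s. F z (X z) = 0" using ev by (rule eventually_mono) auto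
  have decA: "F z y - F s y = (z - s) * A z y" for z y
    unfolding F_def A_def Qg_def by algebra
  have decB: "F s y - F s (X s) = (y - X s) * B y" for y
    unfolding F_def B_def x0_def by (rule Bq_dec)
  have contA: "isCont (\<lambda>z. A z (X z)) s" unfolding A_def using contX by (intro continuous_intros)
  have contB: "isCont B (X s)" unfolding B_def by (rule Bq_cont)
  have Cpos: "Cg (gb^2 * t) (gb * s) eta x0 > 0" using xr_props(4)[OF h] by (simp add: x0_def X_def)
  have BB: "B (X s) = 2 * Cg (gb^2 * t) (gb * s) eta x0" unfolding B_def x0_def by (rule Bq_diag)
  have Bnz: "B (X s) \<noteq> 0" using BB Cpos by simp
  have d: "(X has_real_derivative (- A s (X s) / B (X s))) (at s)"
    by (rule ift_deriv[OF ev0 contX decA decB contA contB Bnz])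
  have Xphi: "X = (\<lambda>s'. phi gb eta t s')" by (simp add: X_def phi_xr fun_eq_iff)
  have x0phi: "phi gb eta t s = x0" by (simp add: x0_def X_def phi_xr)
  have Aval: "- A s x0 = 2 * (gb * x0 * coefA gb eta t s x0)"
    unfolding A_def coefA_def Let_def by algebra
  have BB': "B x0 = 2 * coefC gb eta t s x0" using BB unfolding coefC_Cg by (simp add: x0_def)
  have Cpos': "coefC gb eta t s x0 > 0" using Cpos unfolding coefC_Cg .
  have "- A s x0 / B x0 = gb * x0 * coefA gb eta t s x0 / coefC gb eta t s x0"
    unfolding BB' Aval using Cpos' by (simp add: field_simps)
  then have "- A s (X s) / B (X s) = gb * x0 * coefA gb eta t s x0 / coefC gb eta t s x0" by (simp add: x0_def)
  then show ?thesis using d unfolding Xphi x0phi by simp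
qed


definition N1p :: "real \<Rightarrow> real \<Rightarrow> real \<Rightarrow> real \<Rightarrow> real \<Rightarrow> real" where
  "N1p gb eta t s x = gb^2 * ((1 - eta) * coefB gb eta t s x - eta * x^2) * x^2"

definition N1s :: "real \<Rightarrow> real \<Rightarrow> real \<Rightarrow> real \<Rightarrow> real \<Rightarrow> real" where
  "N1s gb eta t s x = (4 * gb^3 * x^3 - 6 * gb^3 * eta * x^3 + 2 * gb^3 * eta^2 * x^3)"
definition N1x :: "real \<Rightarrow> real \<Rightarrow> real \<Rightarrow> real \<Rightarrow> real \<Rightarrow> real" where
  "N1x gb eta t s x = (4 * gb^2 * x - 4 * gb^2 * x^3 - 4 * gb^2 * eta * x + 12 * gb^3 * s * x^2 - 18 * gb^3 * eta * s * x^2 + 6 * gb^3 * eta^2 * s * x^2 + 8 * gb^4 * t * x^3 - 16 * gb^4 * eta * t * x^3 + 8 * gb^4 * eta^2 * t * x^3)"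
definition Cs :: "real \<Rightarrow> real \<Rightarrow> real \<Rightarrow> real \<Rightarrow> real \<Rightarrow> real" where
  "Cs gb eta t s x = (- 2 * gb + 3 * gb * x^2 + gb * eta - 8 * gb^2 * s * x + 8 * gb^2 * eta * s * x - 2 * gb^2 * eta^2 * s * x - 6 * gb^3 * t * x^2 + 9 * gb^3 * eta * t * x^2 - 3 * gb^3 * eta^2 * t * x^2)"
definition Cx :: "real \<Rightarrow> real \<Rightarrow> real \<Rightarrow> real \<Rightarrow> real \<Rightarrow> real" where
  "Cx gb eta t s x = (1 + 6 * gb * s * x - 4 * gb^2 * s^2 - 2 * gb^2 * t + 6 * gb^2 * t * x^2 + 4 * gb^2 * eta * s^2 + 2 * gb^2 * eta * t - gb^2 * eta^2 * s^2 - 12 * gb^3 * t * s * x + 18 * gb^3 * eta * t * s * x - 6 * gb^3 * eta^2 * t * s * x - 6 * gb^4 * t^2 * x^2 + 12 * gb^4 * eta * t^2 * x^2 - 6 * gb^4 * eta^2 * t^2 * x^2)"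
definition Mp :: "real \<Rightarrow> real \<Rightarrow> real \<Rightarrow> real \<Rightarrow> real \<Rightarrow> real" where
  "Mp gb eta t s x = (8 * gb^3 * x - 8 * gb^3 * x^3 + 6 * gb^3 * x^5 - 12 * gb^3 * eta * x + 6 * gb^3 * eta * x^3 + 4 * gb^3 * eta^2 * x + 32 * gb^4 * s * x^2 - 16 * gb^4 * s * x^4 - 64 * gb^4 * eta * s * x^2 + 16 * gb^4 * eta * s * x^4 + 40 * gb^4 * eta^2 * s * x^2 - 4 * gb^4 * eta^2 * s * x^4 - 8 * gb^4 * eta^3 * s * x^2 + 32 * gb^5 * s^2 * x^3 + 16 * gb^5 * t * x^3 - 8 * gb^5 * t * x^5 - 80 * gb^5 * eta * s^2 * x^3 - 40 * gb^5 * eta * t * x^3 + 18 * gb^5 * eta * t * x^5 + 72 * gb^5 * eta^2 * s^2 * x^3 + 32 * gb^5 * eta^2 * t * x^3 - 10 * gb^5 * eta^2 * t * x^5 - 28 * gb^5 * eta^3 * s^2 * x^3 - 8 * gb^5 * eta^3 * t * x^3 + 4 * gb^5 * eta^4 * s^2 * x^3 + 32 * gb^6 * t * s * x^4 - 96 * gb^6 * eta * t * s * x^4 + 104 * gb^6 * eta^2 * t * s * x^4 - 48 * gb^6 * eta^3 * t * s * x^4 + 8 * gb^6 * eta^4 * t * s * x^4 + 8 * gb^7 * t^2 * x^5 - 28 * gb^7 * eta * t^2 * x^5 + 36 * gb^7 * eta^2 * t^2 * x^5 - 20 * gb^7 * eta^3 * t^2 * x^5 + 4 * gb^7 * eta^4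 * t^2 * x^5)"

lemma N1p_deriv:
  assumes dX: "(X has_real_derivative Xd) (at s0)"
  shows "((\<lambda>s. N1p gb eta t s (X s)) has_real_derivative
           (N1s gb eta t s0 (X s0) + N1x gb eta t s0 (X s0) * Xd)) (at s0)"
  unfolding N1p_def coefB_def Let_def N1s_def N1x_def
  apply (rule derivative_eq_intros dX refl)+
  apply simp
  apply algebra
  done

lemma C_deriv:
  assumes dX: "(X has_real_derivative Xd) (at s0)"
  shows "((\<lambda>s. coefC gb eta t s (X s)) has_real_derivative
           (Cs gb eta t s0 (X s0) + Cx gb eta t s0 (X s0) * Xd)) (at s0)"
  unfolding coefC_def Let_def Cs_def Cx_def
  apply (rule derivative_eq_intros dX refl)+
  apply simp
  apply algebra
  done

lemma key_poly:
  "(coefC gb eta t s x * N1s gb eta t s x + gb * x * coefA gb eta t s x * N1x gb eta t s x) * coefC gb eta t s x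
   - N1p gb eta t s x * (coefC gb eta t s x * Cs gb eta t s x + gb * x * coefA gb eta t s x * Cx gb eta t s x)
   - gb^3 * x * (coefA gb eta t s x * (coefB gb eta t s x + coefC gb eta t s x * x) *
        ((1 - eta) * coefB gb eta t s x - eta * x^2) + eta^2 * coefH gb s x * x^4)
   = Mp gb eta t s x * quartic gb eta t s x"
  unfolding coefA_def coefB_def coefC_def coefH_def N1p_def N1s_def N1x_def Cs_def Cx_def Mp_def quartic_def Let_def
  by algebra

lemma quot_alg:
  fixes N n1s n1x cs cx A C g x :: real
  assumes "C \<noteq> 0"
  shows "((n1s + n1x * (g * x * A / C)) * (2 * C) - N * (2 * (cs + cx * (g * x * A / C)))) / ((2 * C) * (2 * C))
       = ((C * n1s + g * x * A * n1x) * C - N * (C * cs + g * x * A * cx)) / (2 * C^3)"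
  using assms by (simp add: field_simps power3_eq_cube)


lemma hyp_from_assms:
  fixes gb eta t s :: real
  assumes "gb > 0" and "0 \<le> eta" and "eta \<le> 1"
    and "gb * sqrt t < b0 eta"
    and "0 \<le> t" and "\<bar>s\<bar> < sqrt t"
  shows "hyp (gb^2 * t) (gb * s) eta"
proof -
  define g where "g = gb * sqrt t"
  have g0: "g \<ge> 0" using assms by (simp add: g_def)
  have gg: "g^2 = gb^2 * t" using assms by (simp add: g_def power_mult_distrib)
  have st: "s^2 < t"
  proof -
    have "\<bar>s\<bar>^2 < (sqrt t)^2" using assms(6) by (intro power_strict_mono) auto
    then show ?thesis using assms(5) by simp
  qed
  have s2: "(gb * s)^2 < gb^2 * t" using st assms(1) by (simp add: power_mult_distrib)
  have b: "(1 - eta) * g < 1 \<and> eta * g < 1"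
  proof (cases "eta \<le> 1/3")
    case True
    then have gl: "g < 1 / (1 - eta)" using assms(4) by (simp add: b0_def g_def)
    have pe: "1 - eta > 0" using True by simp
    then have "(1 - eta) * g < 1" using gl by (simp add: field_simps)
    moreover have "eta * g \<le> (1/2) * ((1-eta) * g)"
    proof -
      have "eta \<le> (1/2) * (1 - eta)" using True by simp
      then show ?thesis using g0 by (metis mult.assoc mult_right_mono)
    qed
    ultimately show ?thesis by linarith
  next
    case False
    then have gl: "g < 1 / (2 * eta)" using assms(4) by (simp add: b0_def g_def)
    have pe: "eta > 0" using False by simp
    then have eg: "eta * g < 1/2" using gl by (simp add: field_simps)
    have "(1 - eta) * g \<le> (2 * eta) * g" using False g0 by (intro mult_right_mono) auto
    moreover have "(2 * eta) * g = 2 * (eta * g)" by simp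
    ultimately show ?thesis using eg by linarith
  qed
  have n1: "(1 - eta) * g \<ge> 0" using assms(3) g0 by simp
  have n2: "eta * g \<ge> 0" using assms(2) g0 by simp
  have "((1 - eta) * g)^2 < 1^2"
    using b n1 by (intro power_strict_mono) auto
  moreover have "(eta * g)^2 < 1^2"
    using b n2 by (intro power_strict_mono) auto
  ultimately show ?thesis using s2 assms(2,3) gg unfolding hyp_def by (simp add: power_mult_distrib)
qed

theorem lemma4p2:
  fixes gb eta t s :: real
  assumes "gb > 0" and "0 \<le> eta" and "eta \<le> 1"
    and "gb * sqrt t < b0 eta"
    and "0 \<le> t" and "\<bar>s\<bar> < sqrt t"
  shows "(((\<lambda>t'. phi gb eta t' s) has_real_derivative
           (let x = phi gb eta t s; B = coefB gb eta t s x; C = coefC gb eta t s x in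
              gb^2 / (2 * C) * ((1 - eta) * B - eta * x^2) * x^2)) (at t)) \<and>
         ((\<lambda>s'. phi1 gb eta t s') has_real_derivative
           (let x = phi gb eta t s; A = coefA gb eta t s x; B = coefB gb eta t s x;
                C = coefC gb eta t s x; H = coefH gb s x in
              gb^3 / (2 * C^3) * (A * (B + C * x) * ((1 - eta) * B - eta * x^2)
                                   + eta^2 * H * x^4) * x)) (at s)"
proof
  have gb: "gb > 0" using assms(1) .
  have h: "hyp (gb^2 * t) (gb * s) eta" using hyp_from_assms[OF assms] .
  show "((\<lambda>t'. phi gb eta t' s) has_real_derivative
           (let x = phi gb eta t s; B = coefB gb eta t s x; C = coefC gb eta t s x in
              gb^2 / (2 * C) * ((1 - eta) * B - eta * x^2) * x^2)) (at t)"
    using phi_dt[OF gb h] by (simp add: Let_def)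
  define X where "X = (\<lambda>s'. phi gb eta t s')"
  define x where "x = phi gb eta t s"
  define Xd where "Xd = gb * x * coefA gb eta t s x / coefC gb eta t s x"
  have Xs: "X s = x" by (simp add: X_def x_def)
  have dX: "(X has_real_derivative Xd) (at s)" using phi_ds[OF gb h] by (simp add: X_def x_def Xd_def)
  have Cpos: "coefC gb eta t s x > 0"
    using xr_props(4)[OF h] by (simp add: x_def phi_xr coefC_Cg)
  have Q0: "quartic gb eta t s x = 0"
    using xr_props(2)[OF h] by (simp add: x_def phi_xr quartic_Qg)
  have evH: "eventually (\<lambda>z. hyp (gb^2 * t) (gb * z) eta) (nhds s)"
  proof -
    have "((\<lambda>z. gb * z) \<longlongrightarrow> gb * s) (at s)" by (intro tendsto_intros)
    then show ?thesis using hyp_ev[of "\<lambda>z. gb^2 * t" s "\<lambda>z. gb * z" eta] h by simp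
  qed
  have ev: "eventually (\<lambda>s'. phi1 gb eta t s' = N1p gb eta t s' (X s') / (2 * coefC gb eta t s' (X s'))) (nhds s)"
    using evH
  proof eventually_elim
    case (elim s')
    have "deriv (\<lambda>t'. phi gb eta t' s') t = gb^2 / (2 * coefC gb eta t s' (phi gb eta t s')) *
        ((1 - eta) * coefB gb eta t s' (phi gb eta t s') - eta * (phi gb eta t s')^2) * (phi gb eta t s')^2"
      by (rule DERIV_imp_deriv[OF phi_dt[OF gb elim]])
    then show ?case unfolding phi1_def X_def N1p_def by simp
  qed
  define N where "N = N1p gb eta t s x"
  define C where "C = coefC gb eta t s x"
  have Cnz: "2 * coefC gb eta t s (X s) \<noteq> 0" using Cpos Xs by simp
  have dF: "((\<lambda>s'. N1p gb eta t s' (X s') / (2 * coefC gb eta t s' (X s'))) has_real_derivative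
     (((N1s gb eta t s x + N1x gb eta t s x * Xd) * (2 * C) - N * (2 * (Cs gb eta t s x + Cx gb eta t s x * Xd)))
        / ((2 * C) * (2 * C)))) (at s)"
    using DERIV_divide[OF N1p_deriv[OF dX] DERIV_cmult[OF C_deriv[OF dX], of 2] Cnz]
    unfolding Xs N_def C_def by simp
  have val: "((N1s gb eta t s x + N1x gb eta t s x * Xd) * (2 * C) - N * (2 * (Cs gb eta t s x + Cx gb eta t s x * Xd)))
        / ((2 * C) * (2 * C)) =
      (let x = phi gb eta t s; A = coefA gb eta t s x; B = coefB gb eta t s x;
                C = coefC gb eta t s x; H = coefH gb s x in
              gb^3 / (2 * C^3) * (A * (B + C * x) * ((1 - eta) * B - eta * x^2)
                                   + eta^2 * H * x^4) * x)"
  proof -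
    have Cnz': "C \<noteq> 0" using Cpos by (simp add: C_def)
    have "((N1s gb eta t s x + N1x gb eta t s x * Xd) * (2 * C) - N * (2 * (Cs gb eta t s x + Cx gb eta t s x * Xd)))
        / ((2 * C) * (2 * C)) =
        ((C * N1s gb eta t s x + gb * x * coefA gb eta t s x * N1x gb eta t s x) * C
          - N * (C * Cs gb eta t s x + gb * x * coefA gb eta t s x * Cx gb eta t s x)) / (2 * C^3)"
      unfolding Xd_def C_def[symmetric] by (rule quot_alg[OF Cnz'])
    also have "\<dots> = gb^3 * x * (coefA gb eta t s x * (coefB gb eta t s x + C * x) *
        ((1 - eta) * coefB gb eta t s x - eta * x^2) + eta^2 * coefH gb s x * x^4) / (2 * C^3)"
      using key_poly[of gb eta t s x] Q0 unfolding N_def C_def by simp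
    also have "\<dots> = (let x = phi gb eta t s; A = coefA gb eta t s x; B = coefB gb eta t s x;
                C = coefC gb eta t s x; H = coefH gb s x in
              gb^3 / (2 * C^3) * (A * (B + C * x) * ((1 - eta) * B - eta * x^2)
                                   + eta^2 * H * x^4) * x)"
      unfolding Let_def x_def[symmetric] C_def[symmetric] by simp
    finally show ?thesis .
  qed
  have "((\<lambda>s'. N1p gb eta t s' (X s') / (2 * coefC gb eta t s' (X s'))) has_real_derivative
      (let x = phi gb eta t s; A = coefA gb eta t s x; B = coefB gb eta t s x;
                C = coefC gb eta t s x; H = coefH gb s x in
              gb^3 / (2 * C^3) * (A * (B + C * x) * ((1 - eta) * B - eta * x^2)
                                   + eta^2 * H * x^4) * x)) (at s)"
    using dF unfolding val .
  then show "((\<lambda>s'. phi1 gb eta t s') has_real_derivative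
           (let x = phi gb eta t s; A = coefA gb eta t s x; B = coefB gb eta t s x;
                C = coefC gb eta t s x; H = coefH gb s x in
              gb^3 / (2 * C^3) * (A * (B + C * x) * ((1 - eta) * B - eta * x^2)
                                   + eta^2 * H * x^4) * x)) (at s)"
    by (subst DERIV_cong_ev[OF refl ev refl])
qed

end
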